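(* Consider the setting described in the context and assume $D>2$. For $t\ge 1$ let $\mathcal{I}_0(t)=\bigcup_{m=0}^{t-1}\mathcal{F}_0(m)$ and $\mathcal{I}_1(t)=\Big(\bigcup_{m=0}^{t-1}\mathcal{F}_{D-1}(m)\Big)\setminus \mathcal{I}_0(t)$. Then for every $t\ge1$, $a_i(t)=1$ for all $i\in\mathcal{I}_1(t)$.
   Context: $G=(V,E)$ is a finite connected undirected graph with node set $V=\{0,\dots,N-1\}$; $\mathcal{N}(i)$ denotes the set of neighbours of $i$. Every edge has length $1$, $d_{ij}$ is the hop distance between $i$ and $j$, and $\mathcal{F}_k(m)=\{i\in V : d_{ik}=m\}$. Every node carries value $v_i=1$. The source set is $S(t)=\{D-1\}$ for $t\le 0$ and $S(t)=\{0\}$ for $t\ge 1$. The integer $D$ satisfies $\max_{i\in V}d_{i0}=D-1$, and nodes are labelled so that $0,1,\dots,D-1$ is a path in which node $i$ is a neighbour of $i+1$ with $d_{0,i}=i$ for $0\le i\le D-1$. The algorithm updates, for $t\ge1$: $\hat d_i(t)=0$ if $i\in S(t)$, and $\hat d_i(t)=\min_{j\in\mathcal{N}(i)}\{\hat d_j(t-1)+1\}$ otherwise; $c_i(t)=i$ if $i\in S(t)$, and otherwise $c_i(t)$ is a minimizer $j\in\mathcal{N}(i)$ of $\hat d_j(t-1)+1$; $C_i(t)=\{j : c_j(t-1)=i \text{ and } \hat d_j(t-1)=\hat d_i(t)+1\}$; $a_i(t)=\sum_{j\in C_i(t)}a_j(t-1)+v_i$. Initial values $(\hat d_i(0),c_i(0),a_i(0))$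 are steady-state values of these recursions when the source set is constantly $\{D-1\}$; in particular $\hat d_i(0)=m$ for all $i\in\mathcal{F}_{D-1}(m)$, and for every integer $m$, $\sum_{i\in\mathcal{F}_{D-1}(m)}a_i(0)\le N$. *)

theory Defs
  imports Main
begin

definition is_walk :: "(nat \<Rightarrow> nat \<Rightarrow> bool) \<Rightarrow> (nat \<Rightarrow> nat) \<Rightarrow> nat \<Rightarrow> nat \<Rightarrow> nat \<Rightarrow> bool" where
  "is_walk adj p n i j \<longleftrightarrow> p 0 = i \<and> p n = j \<and> (\<forall>k<n. adj (p k) (p (Suc k)))"

definition simple_graph :: "nat \<Rightarrow> (nat \<Rightarrow> nat \<Rightarrow> bool) \<Rightarrow> bool" where
  "simple_graph N adj \<longleftrightarrow>
     (\<forall>i j. adj i j \<longrightarrow> i < N \<and> j < N) \<and>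
     (\<forall>i j. adj i j \<longrightarrow> adj j i) \<and> (\<forall>i. \<not> adj i i)"

definition connected_graph :: "nat \<Rightarrow> (nat \<Rightarrow> nat \<Rightarrow> bool) \<Rightarrow> bool" where
  "connected_graph N adj \<longleftrightarrow> (\<forall>i<N. \<forall>j<N. \<exists>p n. is_walk adj p n i j)"

definition hop_dist :: "(nat \<Rightarrow> nat \<Rightarrow> bool) \<Rightarrow> nat \<Rightarrow> nat \<Rightarrow> nat" where
  "hop_dist adj i j = (LEAST n. \<exists>p. is_walk adj p n i j)"

definition level :: "nat \<Rightarrow> (nat \<Rightarrow> nat \<Rightarrow> bool) \<Rightarrow> nat \<Rightarrow> nat \<Rightarrow> nat set" where
  "level N adj k m = {i. i < N \<and> hop_dist adj i k = m}"

text \<open>One step of the algorithm with source s, from state (dh, c, a) at time t-1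
  to state (dh', c', a') at time t (all nodes carry value v_i = 1).\<close>
definition alg_step :: "nat \<Rightarrow> (nat \<Rightarrow> nat \<Rightarrow> bool) \<Rightarrow> nat \<Rightarrow>
    (nat \<Rightarrow> nat) \<Rightarrow> (nat \<Rightarrow> nat) \<Rightarrow> (nat \<Rightarrow> nat) \<Rightarrow>
    (nat \<Rightarrow> nat) \<Rightarrow> (nat \<Rightarrow> nat) \<Rightarrow> (nat \<Rightarrow> nat) \<Rightarrow> bool" where
  "alg_step N adj s dh c a dh' c' a' \<longleftrightarrow>
     (\<forall>i<N.
        dh' i = (if i = s then 0 else Min {dh j + 1 | j. adj i j}) \<and>
        (if i = s then c' i = i else adj i (c' i) \<and> dh (c' i) + 1 = dh' i) \<and>
        a' i = (\<Sum>j\<in>{j. j < N \<and> c j = i \<and> dh j = dh' i + 1}. a j) + 1)"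

end

theory Submission
  imports Defs
begin

lemma hd_le: "is_walk adj p n i j \<Longrightarrow> hop_dist adj i j \<le> n"
  unfolding hop_dist_def by (rule Least_le) blast

lemma hd_ex: "is_walk adj p n i j \<Longrightarrow> \<exists>q. is_walk adj q (hop_dist adj i j) i j"
  unfolding hop_dist_def by (rule LeastI_ex) blast

lemma hd_tri:
  assumes "adj i j" "is_walk adj p n j k"
  shows "hop_dist adj i k \<le> hop_dist adj j k + 1"
proof -
  obtain q where q: "is_walk adj q (hop_dist adj j k) j k" using hd_ex[OF assms(2)] by blast
  let ?r = "\<lambda>m. if m = 0 then i else q (m - 1)"
  have "is_walk adj ?r (hop_dist adj j k + 1) i k"
    using q assms(1) unfolding is_walk_def
    by (auto simp: less_Suc_eq_0_disj)
  from hd_le[OF this] show ?thesis .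
qed

lemma hd_next:
  assumes "is_walk adj p n i k" "hop_dist adj i k > 0"
  shows "\<exists>j. adj i j \<and> hop_dist adj j k + 1 \<le> hop_dist adj i k"
proof -
  obtain q where q: "is_walk adj q (hop_dist adj i k) i k" using hd_ex[OF assms(1)] by blast
  define h where "h = hop_dist adj i k"
  then obtain h' where h': "h = Suc h'" using assms(2) gr0_implies_Suc by blast
  have "is_walk adj (\<lambda>m. q (Suc m)) h' (q 1) k"
    using q unfolding is_walk_def h_def[symmetric] h' by auto
  hence "hop_dist adj (q 1) k \<le> h'" by (rule hd_le)
  moreover have "adj i (q 1)" using q unfolding is_walk_def h_def[symmetric] h' by auto
  ultimately show ?thesis using h' h_def by auto
qed

lemma hd_zero: "hop_dist adj i i = 0"
proof -
  have "is_walk adj (\<lambda>_. i) 0 i i" unfolding is_walk_def by auto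
  from hd_le[OF this] show ?thesis by simp
qed

lemma hd_pos: assumes "is_walk adj p n i k" "i \<noteq> k" shows "hop_dist adj i k > 0"
proof (rule ccontr)
  assume "\<not> ?thesis"
  hence "hop_dist adj i k = 0" by simp
  with hd_ex[OF assms(1)] obtain q where "is_walk adj q 0 i k" by auto
  thus False using assms(2) unfolding is_walk_def by auto
qed

theorem lemma3:
  fixes N D :: nat
    and adj :: "nat \<Rightarrow> nat \<Rightarrow> bool"
    and dh c a :: "nat \<Rightarrow> nat \<Rightarrow> nat"
  assumes graph: "simple_graph N adj"
    and conn: "connected_graph N adj"
    and D_gt: "D > 2"
    and D_le: "D \<le> N"
    and ecc: "Max {hop_dist adj i 0 | i. i < N} = D - 1"
    and path_adj: "\<forall>i. i + 1 < D \<longrightarrow> adj i (i + 1)"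
    and path_dist: "\<forall>i<D. hop_dist adj 0 i = i"
    and steady: "alg_step N adj (D - 1) (dh 0) (c 0) (a 0) (dh 0) (c 0) (a 0)"
    and init_dist: "\<forall>m. \<forall>i\<in>level N adj (D - 1) m. dh 0 i = m"
    and init_sum: "\<forall>m. (\<Sum>i\<in>level N adj (D - 1) m. a 0 i) \<le> N"
    and step: "\<forall>t. alg_step N adj 0 (dh t) (c t) (a t) (dh (Suc t)) (c (Suc t)) (a (Suc t))"
  shows "\<forall>t\<ge>1. \<forall>i.
           i \<in> (\<Union>m<t. level N adj (D - 1) m) - (\<Union>m<t. level N adj 0 m) \<longrightarrow> a t i = 1"
proof -
  have adjN: "\<And>i j. adj i j \<Longrightarrow> j < N" using graph unfolding simple_graph_def by blast
  have wex: "\<And>i j. i < N \<Longrightarrow> j < N \<Longrightarrow> \<exists>p n. is_walk adj p n i j"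
    using conn unfolding connected_graph_def by blast
  have N0: "0 < N" using D_le D_gt by simp
  have ND: "D - 1 < N" using D_le D_gt by simp
  have fin: "\<And>f i. finite {(f::nat\<Rightarrow>nat) j | j. adj i j}"
  proof -
    fix f :: "nat \<Rightarrow> nat" and i
    have "{f j | j. adj i j} \<subseteq> f ` {..<N}" using adjN by auto
    thus "finite {f j | j. adj i j}" by (rule finite_subset) simp
  qed
  have stepi: "\<And>t i. i < N \<Longrightarrow>
        dh (Suc t) i = (if i = 0 then 0 else Min {dh t j + 1 | j. adj i j}) \<and>
        (if i = 0 then c (Suc t) i = i else adj i (c (Suc t) i) \<and> dh t (c (Suc t) i) + 1 = dh (Suc t) i) \<and>
        a (Suc t) i = (\<Sum>j\<in>{j. j < N \<and> c t j = i \<and> dh t j = dh (Suc t) i + 1}. a t j) + 1"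
    using step unfolding alg_step_def by blast
  have A: "\<And>i. i < N \<Longrightarrow> min t (hop_dist adj i 0) \<le> dh t i" for t
  proof (induction t)
    case 0 then show ?case by simp
  next
    case (Suc t)
    fix i assume iN: "i < N"
    show "min (Suc t) (hop_dist adj i 0) \<le> dh (Suc t) i"
    proof (cases "i = 0")
      case True thus ?thesis using hd_zero[of adj 0] by simp
    next
      case False
      obtain p n where pw: "is_walk adj p n i 0" using wex[OF iN N0] by blast
      from hd_next[OF pw hd_pos[OF pw False]] obtain j0 where "adj i j0" by blast
      hence ne: "{dh t j + 1 | j. adj i j} \<noteq> {}" by blast
      have "\<forall>x\<in>{dh t j + 1 | j. adj i j}. min (Suc t) (hop_dist adj i 0) \<le> x"
      proof
        fix x assume "x \<in> {dh t j + 1 | j. adj i j}"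
        then obtain j where j: "adj i j" "x = dh t j + 1" by blast
        have jN: "j < N" using adjN j(1) .
        obtain q m where "is_walk adj q m j 0" using wex[OF jN N0] by blast
        from hd_tri[OF j(1) this] have "hop_dist adj i 0 \<le> hop_dist adj j 0 + 1" .
        moreover have "min t (hop_dist adj j 0) \<le> dh t j" using Suc.IH jN .
        ultimately show "min (Suc t) (hop_dist adj i 0) \<le> x" using j(2) by linarith
      qed
      hence "min (Suc t) (hop_dist adj i 0) \<le> Min {dh t j + 1 | j. adj i j}"
        using Min_ge_iff[OF fin ne] by blast
      thus ?thesis using stepi[OF iN] False by simp
    qed
  qed
  have D1: "adj (D - 1) (D - 2)"
  proof -
    have "adj (D - 2) (D - 2 + 1)" using path_adj D_gt by simp
    moreover have "D - 2 + 1 = D - 1" using D_gt by simp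
    ultimately have "adj (D - 2) (D - 1)" by simp
    thus ?thesis using graph unfolding simple_graph_def by blast
  qed
  have DD: "hop_dist adj (D - 2) (D - 1) \<le> 1"
  proof -
    have "adj (D - 2) (D - 1)" using D1 graph unfolding simple_graph_def by blast
    hence "is_walk adj (\<lambda>m. if m = 0 then D - 2 else D - 1) 1 (D - 2) (D - 1)"
      unfolding is_walk_def by auto
    from hd_le[OF this] show ?thesis .
  qed
  have B: "\<And>i. i < N \<Longrightarrow> hop_dist adj i (D - 1) \<le> k + 1 \<Longrightarrow> dh k i \<le> k + 1" for k
  proof (induction k)
    case (0 i)
    have "i \<in> level N adj (D - 1) (hop_dist adj i (D - 1))" using 0(1) unfolding level_def by simp
    thus ?case using init_dist 0(2) by auto
  next
    case (Suc k i)
    show ?case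
    proof (cases "i = 0")
      case True thus ?thesis using stepi[OF Suc.prems(1)] by simp
    next
      case False
      obtain j where j: "adj i j" "hop_dist adj j (D - 1) \<le> k + 1"
      proof (cases "i = D - 1")
        case True
        thus ?thesis using that[of "D - 2"] D1 DD by simp
      next
        case F2: False
        obtain p n where pw: "is_walk adj p n i (D - 1)" using wex[OF Suc.prems(1) ND] by blast
        from hd_next[OF pw hd_pos[OF pw F2]] obtain j where "adj i j"
          "hop_dist adj j (D - 1) + 1 \<le> hop_dist adj i (D - 1)" by blast
        thus ?thesis using that Suc.prems(2) by simp
      qed
      have "dh k j \<le> k + 1" using Suc.IH[OF adjN[OF j(1)] j(2)] .
      moreover have "Min {dh k j + 1 | j. adj i j} \<le> dh k j + 1"
        using j(1) by (intro Min_le[OF fin]) blast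
      ultimately show ?thesis using stepi[OF Suc.prems(1)] False by simp
    qed
  qed
  show ?thesis
  proof (intro allI impI)
    fix t i
    assume t1: "1 \<le> t" and iI: "i \<in> (\<Union>m<t. level N adj (D - 1) m) - (\<Union>m<t. level N adj 0 m)"
    have iN: "i < N" and dD: "hop_dist adj i (D - 1) < t" and d0: "t \<le> hop_dist adj i 0"
      using iI unfolding level_def by auto
    obtain s where ts: "t = Suc s" using t1 by (cases t) auto
    have empty: "{j. j < N \<and> c s j = i \<and> dh s j = dh t i + 1} = {}"
    proof (rule ccontr)
      assume "\<not> ?thesis"
      then obtain j where j: "j < N" "c s j = i" "dh s j = dh t i + 1" by blast
      have lowt: "t \<le> dh t i" using A[OF iN, of t] d0 by simp
      show False
      proof (cases s)
        case 0
        have st: "dh 0 j = (if j = D - 1 then 0 else Min {dh 0 l + 1 | l. adj j l}) \<and>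
          (if j = D - 1 then c 0 j = j else adj j (c 0 j) \<and> dh 0 (c 0 j) + 1 = dh 0 j)"
          using steady j(1) unfolding alg_step_def by blast
        show False
        proof (cases "j = D - 1")
          case True thus False using st j 0 by simp
        next
          case False
          hence "dh 0 i + 1 = dh 0 j" using st j 0 by simp
          moreover have "dh 0 i = 0"
          proof -
            have "i \<in> level N adj (D - 1) 0" using iN dD ts 0 unfolding level_def by simp
            thus ?thesis using init_dist by blast
          qed
          ultimately show False using j(3) lowt 0 ts by simp
        qed
      next
        case (Suc r)
        have st: "(if j = 0 then c (Suc r) j = j else adj j (c (Suc r) j) \<and> dh r (c (Suc r) j) + 1 = dh (Suc r) j)"
          using stepi[OF j(1), of r] by blast
        show False
        proof (cases "j = 0")
          case True
          hence "i = 0" using st j Suc by simp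
          thus False using d0 hd_zero[of adj 0] t1 by simp
        next
          case False
          hence "dh r i + 1 = dh s j" using st j Suc by simp
          moreover have "dh r i \<le> r + 1" using B[OF iN, of r] dD ts Suc by simp
          ultimately show False using j(3) lowt Suc ts by simp
        qed
      qed
    qed
    have "a (Suc s) i = (\<Sum>j\<in>{j. j < N \<and> c s j = i \<and> dh s j = dh (Suc s) i + 1}. a s j) + 1"
      using stepi[OF iN, of s] by blast
    thus "a t i = 1" using ts empty by (simp del: Collect_empty_eq)
  qed
qed

end
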